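(* Let $(\mathcal G,\Delta,\{V^i,U^i\}_{i=1}^n)$ be a partition exchange economy with cycle bound $\Delta\ge 2$. Then there exists a fractional exchange $y^*\in[0,1]^{\mathcal C_\Delta}$ in $\mathcal G$ with the following property: for every finite set $V^0$ of additional altruistic donors (with any choice of their out-arcs) and every exchange $\mathcal E^*$ in $\mathcal G^{+V^0}$, if $$u_i(\mathcal E^* )\ \ge\ \Big\lfloor \sum_{c\in\mathcal C_\Delta}\gamma^i_c\,y^*_c\Big\rfloor\quad\text{for all } i\in N,$$ then $\mathcal E^*$ belongs to the $V^0$-supplemented core.
   Context: A partition exchange economy $(\mathcal G,\Delta,\{V^i,U^i\}_{i=1}^n)$ consists of: a set of organizations $N=\{1,\dots,n\}$; pairwise disjoint finite sets $V^1,\dots,V^n$ with $V=V^1\cup\dots\cup V^n$; subsets $U^i\subseteq V^i$ (the patient vertices of organization $i$; vertices of $V^i\setminus U^i$ are altruistic donors); a directed compatibility graph $\mathcal G=(V,E)$ without loops (arc $(u,v)$: the donor of $u$ can give to the patient of $v$); and an integer cycle bound $\Delta\ge 2$. $\mathcal C_\Delta$ denotes the set of directed cycles of $\mathcal G$ of length at most $\Delta$. For $W\subseteq V$, an exchange among $W$ is a set of pairwise vertex-disjoint directed cycles of length at most $\Delta$ in the induced subgraph $\mathcal G[W]$. A fractional exchange is a vector $y\in[0,1]^{\mathcal C_\Delta}$ with $\sum_{c\in\mathcal C_\Delta:\,v\in c}y_c\le 1$ for every $v\in V$. For a cycle $c$ and organization $i$, $\gamma^i_c=|U^i\cap c|$.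 The utility of organization $i$ from an exchange $\mathcal E$ is $u_i(\mathcal E)$, the number of vertices of $U^i$ lying on cycles of $\mathcal E$. Additional altruistic donors: given a finite set $V^0$ of new vertices (belonging to no organization), the extended graph $\mathcal G^{+V^0}$ is obtained from $\mathcal G$ by adding the vertices of $V^0$, an arc from every other vertex into each $a\in V^0$, and for each $a\in V^0$ arcs from $a$ to an arbitrarily chosen set of vertices; an exchange in $\mathcal G^{+V^0}$ is a set of vertex-disjoint directed cycles of length at most $\Delta$ in $\mathcal G^{+V^0}$. A nonempty coalition $P\subseteq N$ blocks an exchange $\mathcal E$ (of $\mathcal G$ or $\mathcal G^{+V^0}$) if there is an exchange $\mathcal E'$ among $\bigcup_{i\in P}V^i$ (in $\mathcal G$, so vertices of $V^0$ cannot be used) with $u_i(\mathcal E')>u_i(\mathcal E)$ for all $i\in P$. An exchange $\mathcal E^*$ in $\mathcal G^{+V^0}$ is in the $V^0$-supplemented core if no nonempty coalition $P\subseteq N$ blocks it. *)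

theory Defs
  imports Complex_Main
begin

definition is_cycle :: "('v \<times> 'v) set \<Rightarrow> nat \<Rightarrow> ('v \<times> 'v) set \<Rightarrow> bool" where
  "is_cycle A D c \<longleftrightarrow> (\<exists>xs. xs \<noteq> [] \<and> distinct xs \<and> length xs \<le> D \<and>
      c = {(xs ! j, xs ! ((j + 1) mod length xs)) | j. j < length xs} \<and> c \<subseteq> A)"

definition cycles :: "('v \<times> 'v) set \<Rightarrow> nat \<Rightarrow> ('v \<times> 'v) set set" where
  "cycles A D = {c. is_cycle A D c}"

definition verts :: "('v \<times> 'v) set \<Rightarrow> 'v set" where
  "verts c = fst ` c"

definition is_exchange :: "('v \<times> 'v) set \<Rightarrow> 'v set \<Rightarrow> nat \<Rightarrow> ('v \<times> 'v) set set \<Rightarrow> bool" where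
  "is_exchange A W D X \<longleftrightarrow> X \<subseteq> cycles (A \<inter> (W \<times> W)) D \<and>
      (\<forall>c\<in>X. \<forall>c'\<in>X. c \<noteq> c' \<longrightarrow> verts c \<inter> verts c' = {})"

definition fractional_exchange :: "('v \<times> 'v) set \<Rightarrow> 'v set \<Rightarrow> nat \<Rightarrow> (('v \<times> 'v) set \<Rightarrow> real) \<Rightarrow> bool" where
  "fractional_exchange A V D y \<longleftrightarrow> (\<forall>c\<in>cycles A D. 0 \<le> y c \<and> y c \<le> 1) \<and>
      (\<forall>v\<in>V. (\<Sum>c\<in>{c\<in>cycles A D. v \<in> verts c}. y c) \<le> 1)"

definition gamma :: "'v set \<Rightarrow> ('v \<times> 'v) set \<Rightarrow> nat" where
  "gamma U c = card (U \<inter> verts c)"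

definition util :: "'v set \<Rightarrow> ('v \<times> 'v) set set \<Rightarrow> nat" where
  "util U X = card (U \<inter> (\<Union>c\<in>X. verts c))"

definition extended_graph :: "('v \<times> 'v) set \<Rightarrow> 'v set \<Rightarrow> 'v set \<Rightarrow> ('v \<times> 'v) set \<Rightarrow> bool" where
  "extended_graph E V V0 E' \<longleftrightarrow>
     E' \<subseteq> (V \<union> V0) \<times> (V \<union> V0) \<and> (\<forall>v. (v, v) \<notin> E') \<and>
     E' \<inter> (V \<times> V) = E \<and>
     (\<forall>a\<in>V0. \<forall>u\<in>V \<union> V0. u \<noteq> a \<longrightarrow> (u, a) \<in> E')"

definition blocks :: "('v \<times> 'v) set \<Rightarrow> (nat \<Rightarrow> 'v set) \<Rightarrow> (nat \<Rightarrow> 'v set) \<Rightarrow> nat \<Rightarrow> nat set \<Rightarrow> ('v \<times> 'v) set set \<Rightarrow> bool" where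
  "blocks E Vs Us D P X \<longleftrightarrow> P \<noteq> {} \<and>
     (\<exists>X'. is_exchange E (\<Union>i\<in>P. Vs i) D X' \<and> (\<forall>i\<in>P. util (Us i) X' > util (Us i) X))"

definition in_supp_core :: "('v \<times> 'v) set \<Rightarrow> (nat \<Rightarrow> 'v set) \<Rightarrow> (nat \<Rightarrow> 'v set) \<Rightarrow> nat \<Rightarrow> nat \<Rightarrow> ('v \<times> 'v) set set \<Rightarrow> bool" where
  "in_supp_core E Vs Us n D X \<longleftrightarrow> \<not> (\<exists>P \<subseteq> {1..n}. blocks E Vs Us D P X)"

end

theory Submission
  imports Defs "HOL-Analysis.Analysis"
begin


lemma kuhn_step:
  fixes F :: "(nat \<Rightarrow> real) \<Rightarrow> (nat \<Rightarrow> real)" and m p :: nat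
  assumes C_def: "C = {x. \<forall>i<m. 0 \<le> x i \<and> x i \<le> 1}"
  and FC: "\<And>x. x \<in> C \<Longrightarrow> F x \<in> C"
  and p: "0 < p"
  shows "\<exists>z\<in>C. \<forall>i<m. \<exists>A\<in>C. \<exists>B\<in>C. (\<forall>j<m. \<bar>A j - z j\<bar> \<le> 1 / real p \<and> \<bar>B j - z j\<bar> \<le> 1 / real p)
     \<and> A i \<le> F A i \<and> F B i \<le> B i"
proof -
  define R :: "(nat \<Rightarrow> nat) \<Rightarrow> nat \<Rightarrow> real" where "R y = (\<lambda>j. real (y j) / real p)" for y
  define label :: "(nat \<Rightarrow> nat) \<Rightarrow> nat \<Rightarrow> nat" where
    "label y i = (if R y i \<le> F (R y) i \<and> R y i \<noteq> 1 then 0 else 1)" for y i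
  have RC: "R y \<in> C" if "\<forall>i<m. y i \<le> p" for y
    using that p by (auto simp: C_def R_def divide_le_eq_1)
  obtain q where q1: "\<forall>i<m. q i < p"
    and q2: "\<forall>i<m. \<exists>r s. (\<forall>j<m. q j \<le> r j \<and> r j \<le> q j + 1) \<and> (\<forall>j<m. q j \<le> s j \<and> s j \<le> q j + 1) \<and> label r i \<noteq> label s i"
  proof (rule kuhn_lemma[OF p, of m label])
    show "\<forall>x. (\<forall>i<m. x i \<le> p) \<longrightarrow> (\<forall>i<m. label x i = 0 \<or> label x i = 1)"
      by (auto simp: label_def)
    show "\<forall>x. (\<forall>i<m. x i \<le> p) \<longrightarrow> (\<forall>i<m. x i = 0 \<longrightarrow> label x i = 0)"
    proof (intro allI impI)
      fix x i assume x: "\<forall>i<m. x i \<le> p" and i: "i < m" "x i = 0"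
      have "F (R x) \<in> C" using FC RC x by blast
      then have "0 \<le> F (R x) i" using i by (auto simp: C_def)
      then show "label x i = 0" using i by (auto simp: label_def R_def)
    qed
    show "\<forall>x. (\<forall>i<m. x i \<le> p) \<longrightarrow> (\<forall>i<m. x i = p \<longrightarrow> label x i = 1)"
      using p by (auto simp: label_def R_def)
  qed auto
  define z where "z = R q"
  have zC: "z \<in> C" unfolding z_def by (rule RC) (use q1 in auto)
  have near: "\<bar>R r j - z j\<bar> \<le> 1 / real p" if "q j \<le> r j" "r j \<le> q j + 1" for r j
  proof -
    have "\<bar>R r j - z j\<bar> = (real (r j) - real (q j)) / real p"
      using that p by (auto simp: R_def z_def diff_divide_distrib[symmetric])
    also have "\<dots> \<le> 1 / real p" using that p by (auto simp: divide_right_mono)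
    finally show ?thesis .
  qed
  have lab0: "R r i \<le> F (R r) i" if "label r i = 0" for r i
    using that by (auto simp: label_def split: if_splits)
  have lab1: "F (R r) i \<le> R r i" if "label r i \<noteq> 0" "i < m" "\<forall>i<m. r i \<le> p" for r i
  proof (cases "R r i = 1")
    case True
    have "F (R r) \<in> C" using FC RC that by blast
    then show ?thesis using True that by (auto simp: C_def)
  next
    case False
    then show ?thesis using that by (auto simp: label_def split: if_splits)
  qed
  show ?thesis
  proof (rule bexI[OF _ zC], intro allI impI)
    fix i assume i: "i < m"
    obtain r s where rs: "\<forall>j<m. q j \<le> r j \<and> r j \<le> q j + 1" "\<forall>j<m. q j \<le> s j \<and> s j \<le> q j + 1"
      "label r i \<noteq> label s i" using q2 i by blast
    have rp: "\<forall>j<m. r j \<le> p"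
    proof (intro allI impI)
      fix j assume "j < m" then show "r j \<le> p" using rs(1) q1 by (metis Suc_eq_plus1 Suc_leI le_trans)
    qed
    have sp: "\<forall>j<m. s j \<le> p"
    proof (intro allI impI)
      fix j assume "j < m" then show "s j \<le> p" using rs(2) q1 by (metis Suc_eq_plus1 Suc_leI le_trans)
    qed
    have nr: "\<forall>j<m. \<bar>R r j - z j\<bar> \<le> 1 / real p" and ns: "\<forall>j<m. \<bar>R s j - z j\<bar> \<le> 1 / real p"
      using rs near by auto
    show "\<exists>A\<in>C. \<exists>B\<in>C. (\<forall>j<m. \<bar>A j - z j\<bar> \<le> 1 / real p \<and> \<bar>B j - z j\<bar> \<le> 1 / real p)
     \<and> A i \<le> F A i \<and> F B i \<le> B i"
    proof (cases "label r i = 0")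
      case True
      then have "label s i \<noteq> 0" using rs by auto
      then show ?thesis using True lab0 lab1[OF _ i sp] RC[OF rp] RC[OF sp] nr ns by blast
    next
      case False
      then have "label s i = 0" using rs by (auto simp: label_def split: if_splits)
      then show ?thesis using False lab0 lab1[OF _ i rp] RC[OF rp] RC[OF sp] nr ns by blast
    qed
  qed
qed

lemma brouwer_nat:
  fixes F :: "(nat \<Rightarrow> real) \<Rightarrow> (nat \<Rightarrow> real)" and m :: nat
  assumes C_def: "C = {x. \<forall>i<m. 0 \<le> x i \<and> x i \<le> 1}"
  and FC: "\<And>x. x \<in> C \<Longrightarrow> F x \<in> C"
  and cont: "\<And>X l i. (\<And>k. X k \<in> C) \<Longrightarrow> l \<in> C \<Longrightarrow> (\<And>j. j < m \<Longrightarrow> (\<lambda>k. X k j) \<longlonglongrightarrow> l j)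
        \<Longrightarrow> i < m \<Longrightarrow> (\<lambda>k. F (X k) i) \<longlonglongrightarrow> F l i"
  shows "\<exists>x\<in>C. \<forall>i<m. F x i = x i"
proof -
  define Q where "Q k z i A B \<longleftrightarrow> A \<in> C \<and> B \<in> C \<and> (\<forall>j<m. \<bar>A j - z j\<bar> \<le> 1 / real (Suc k) \<and> \<bar>B j - z j\<bar> \<le> 1 / real (Suc k))
     \<and> A i \<le> F A i \<and> F B i \<le> B i" for k z i A B
  have "\<forall>k. \<exists>z. z \<in> C \<and> (\<forall>i<m. \<exists>A B. Q k z i A B)"
  proof
    fix k
    show "\<exists>z. z \<in> C \<and> (\<forall>i<m. \<exists>A B. Q k z i A B)"
    proof -
      obtain z where zC: "z \<in> C" and zz: "\<forall>i<m. \<exists>A\<in>C. \<exists>B\<in>C. (\<forall>j<m. \<bar>A j - z j\<bar> \<le> 1 / real (Suc k) \<and> \<bar>B j - z j\<bar> \<le> 1 / real (Suc k))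
     \<and> A i \<le> F A i \<and> F B i \<le> B i"
        using kuhn_step[where F=F and p="Suc k", OF C_def FC] by auto
      have "\<forall>i<m. \<exists>A B. Q k z i A B"
      proof (intro allI impI)
        fix i assume "i < m"
        then obtain A B where "A \<in> C" "B \<in> C" "\<forall>j<m. \<bar>A j - z j\<bar> \<le> 1 / real (Suc k) \<and> \<bar>B j - z j\<bar> \<le> 1 / real (Suc k)"
          "A i \<le> F A i" "F B i \<le> B i" using zz by meson
        then show "\<exists>A B. Q k z i A B" unfolding Q_def by blast
      qed
      with zC show ?thesis by blast
    qed
  qed
  then obtain z where z: "\<And>k. z k \<in> C" "\<And>k i. i < m \<Longrightarrow> \<exists>A B. Q k (z k) i A B"
    by metis
  define A where "A k i = (SOME A. \<exists>B. Q k (z k) i A B)" for k i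
  define B where "B k i = (SOME B. Q k (z k) i (A k i) B)" for k i
  have AB: "Q k (z k) i (A k i) (B k i)" if "i < m" for k i
  proof -
    have "\<exists>B. Q k (z k) i (A k i) B" unfolding A_def using someI_ex[OF z(2)[OF that]] .
    then show ?thesis unfolding B_def by (rule someI_ex)
  qed
  have bnd: "bounded ((\<lambda>x. x j) ` range z)" if "j \<in> {..<m}" for j
  proof -
    have "(\<lambda>x. x j) ` range z \<subseteq> {0..1}" using z(1) that by (auto simp: C_def)
    then show ?thesis by (rule bounded_subset[OF bounded_closed_interval])
  qed
  obtain l r where r: "strict_mono r"
    and lr: "\<forall>e>0. eventually (\<lambda>k. \<forall>j\<in>{..<m}. dist (z (r k) j) (l j) < e) sequentially"
    using compact_lemma_general[where f=z and proj="\<lambda>x k. x k" and unproj="\<lambda>x. x" and basis="{..<m}", OF _ bnd]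
    by auto
  have zl: "(\<lambda>k. z (r k) j) \<longlonglongrightarrow> l j" if "j < m" for j
    unfolding tendsto_iff
  proof (intro allI impI)
    fix e :: real assume "e > 0"
    then show "eventually (\<lambda>k. dist (z (r k) j) (l j) < e) sequentially"
      using lr that by (auto elim!: eventually_mono)
  qed
  have lC: "l \<in> C"
    unfolding C_def
  proof (intro CollectI allI impI conjI)
    fix j assume j: "j < m"
    show "0 \<le> l j" by (rule LIMSEQ_le_const[OF zl[OF j]]) (use z(1) j in \<open>auto simp: C_def\<close>)
    show "l j \<le> 1" by (rule LIMSEQ_le_const2[OF zl[OF j]]) (use z(1) j in \<open>auto simp: C_def\<close>)
  qed
  have inv: "(\<lambda>k. 1 / real (Suc (r k))) \<longlonglongrightarrow> 0"
  proof (rule Lim_null_comparison[OF _ LIMSEQ_Suc[OF lim_inverse_n']])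
    show "\<forall>\<^sub>F k in sequentially. norm (1 / real (Suc (r k))) \<le> 1 / real (Suc k)"
      using seq_suble[OF r] by (auto simp: frac_le)
  qed
  have conv: "(\<lambda>k. Y k j) \<longlonglongrightarrow> l j" if "j < m" "\<And>k. \<bar>Y k j - z (r k) j\<bar> \<le> 1 / real (Suc (r k))" for Y j
  proof -
    have "(\<lambda>k. Y k j - z (r k) j) \<longlonglongrightarrow> 0"
      by (rule Lim_null_comparison[OF _ inv]) (use that in auto)
    from tendsto_add[OF this zl[OF that(1)]] show ?thesis by simp
  qed
  show ?thesis
  proof (rule bexI[OF _ lC], intro allI impI)
    fix i assume i: "i < m"
    have QA: "\<And>k. Q (r k) (z (r k)) i (A (r k) i) (B (r k) i)" using AB[OF i] .
    have A1: "(\<lambda>k. A (r k) i j) \<longlonglongrightarrow> l j" if "j < m" for j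
      by (rule conv[OF that]) (use QA that in \<open>auto simp: Q_def\<close>)
    have B1: "(\<lambda>k. B (r k) i j) \<longlonglongrightarrow> l j" if "j < m" for j
      by (rule conv[OF that]) (use QA that in \<open>auto simp: Q_def\<close>)
    have FA: "(\<lambda>k. F (A (r k) i) i) \<longlonglongrightarrow> F l i"
      by (rule cont[OF _ lC A1 i]) (use QA in \<open>auto simp: Q_def\<close>)
    have FB: "(\<lambda>k. F (B (r k) i) i) \<longlonglongrightarrow> F l i"
      by (rule cont[OF _ lC B1 i]) (use QA in \<open>auto simp: Q_def\<close>)
    have "l i \<le> F l i"
      by (rule LIMSEQ_le[OF A1[OF i] FA]) (use QA in \<open>auto simp: Q_def\<close>)
    moreover have "F l i \<le> l i"
      by (rule LIMSEQ_le[OF FB B1[OF i]]) (use QA in \<open>auto simp: Q_def\<close>)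
    ultimately show "F l i = l i" by simp
  qed
qed



lemma cycles_mono: "A \<subseteq> B \<Longrightarrow> cycles A k \<subseteq> cycles B k"
  unfolding cycles_def is_cycle_def by blast

lemma cycles_sub: "c \<in> cycles A k \<Longrightarrow> c \<subseteq> A"
  unfolding cycles_def is_cycle_def by blast

lemma cycles_finite: "finite A \<Longrightarrow> finite (cycles A k)"
  by (rule finite_subset[of _ "Pow A"]) (use cycles_sub in auto)

lemma verts_ne: "c \<in> cycles A k \<Longrightarrow> verts c \<noteq> {}"
proof -
  assume "c \<in> cycles A k"
  then obtain xs where xs: "xs \<noteq> []" "c = {(xs ! j, xs ! ((j + 1) mod length xs)) | j. j < length xs}"
    unfolding cycles_def is_cycle_def by blast
  then have "(xs ! 0, xs ! ((0 + 1) mod length xs)) \<in> c" by auto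
  then show ?thesis unfolding verts_def by blast
qed

lemma verts_sub: "c \<in> cycles (A \<inter> W \<times> W) k \<Longrightarrow> verts c \<subseteq> W"
  using cycles_sub unfolding verts_def by fastforce

lemma exch_cycles: "is_exchange A W k X \<Longrightarrow> X \<subseteq> cycles A k"
  unfolding is_exchange_def using cycles_mono[of "A \<inter> W \<times> W" A k] by blast

lemma util_sum:
  assumes "finite A" "is_exchange A W k X"
  shows "util U X = (\<Sum>c\<in>X. gamma U c)"
proof -
  have finX: "finite X" using exch_cycles[OF assms(2)] cycles_finite[OF assms(1)] finite_subset by blast
  have fin: "finite (U \<inter> verts c)" if "c \<in> X" for c
  proof -
    have "c \<subseteq> A" using exch_cycles[OF assms(2)] that cycles_sub by blast
    then have "finite c" using assms(1) finite_subset by blast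
    then show ?thesis unfolding verts_def by simp
  qed
  have "U \<inter> (\<Union>c\<in>X. verts c) = (\<Union>c\<in>X. U \<inter> verts c)" by blast
  then have "util U X = card (\<Union>c\<in>X. U \<inter> verts c)" unfolding util_def by simp
  also have "\<dots> = (\<Sum>c\<in>X. card (U \<inter> verts c))"
  proof (rule card_UN_disjoint[OF finX])
    show "\<forall>c\<in>X. finite (U \<inter> verts c)" using fin by blast
    have "\<forall>c\<in>X. \<forall>c'\<in>X. c \<noteq> c' \<longrightarrow> verts c \<inter> verts c' = {}"
      using assms(2) unfolding is_exchange_def by blast
    then show "\<forall>c\<in>X. \<forall>c'\<in>X. c \<noteq> c' \<longrightarrow> U \<inter> verts c \<inter> (U \<inter> verts c') = {}" by blast
  qed
  finally show ?thesis unfolding gamma_def .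
qed



lemma tendsto_Min_fin:
  fixes f :: "'a \<Rightarrow> 'b \<Rightarrow> real"
  assumes "finite A" "A \<noteq> {}" "\<And>a. a \<in> A \<Longrightarrow> ((\<lambda>k. f k a) \<longlongrightarrow> l a) F"
  shows "((\<lambda>k. Min ((f k) ` A)) \<longlongrightarrow> Min (l ` A)) F"
  using assms
proof (induction A rule: finite_ne_induct)
  case (singleton x) then show ?case by simp
next
  case (insert x A)
  have "((\<lambda>k. min (f k x) (Min (f k ` A))) \<longlongrightarrow> min (l x) (Min (l ` A))) F"
    by (intro tendsto_min) (use insert in auto)
  then show ?case using insert by simp
qed

lemma tendsto_Max_fin:
  fixes f :: "'a \<Rightarrow> 'b \<Rightarrow> real"
  assumes "finite A" "A \<noteq> {}" "\<And>a. a \<in> A \<Longrightarrow> ((\<lambda>k. f k a) \<longlongrightarrow> l a) F"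
  shows "((\<lambda>k. Max ((f k) ` A)) \<longlongrightarrow> Max (l ` A)) F"
  using assms
proof (induction A rule: finite_ne_induct)
  case (singleton x) then show ?case by simp
next
  case (insert x A)
  have "((\<lambda>k. max (f k x) (Max (f k ` A))) \<longlongrightarrow> max (l x) (Max (l ` A))) F"
    by (intro tendsto_max) (use insert in auto)
  then show ?case using insert by simp
qed

lemma kkms:
  fixes D :: "'c set" and P :: "'c \<Rightarrow> nat set" and a :: "'c \<Rightarrow> nat \<Rightarrow> nat" and n :: nat
  assumes finD: "finite D" and PD: "\<And>d. d \<in> D \<Longrightarrow> P d \<noteq> {} \<and> P d \<subseteq> {1..n}"
    and slack: "\<And>i. i \<in> {1..n} \<Longrightarrow> \<exists>d\<in>D. P d = {i} \<and> a d i = 0"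
  shows "\<exists>\<mu>::'c \<Rightarrow> real. (\<forall>d\<in>D. 0 \<le> \<mu> d) \<and> (\<forall>i\<in>{1..n}. (\<Sum>d\<in>{d\<in>D. i \<in> P d}. \<mu> d) = 1) \<and>
     (\<forall>d'\<in>D. \<exists>i\<in>P d'. \<forall>d\<in>D. 0 < \<mu> d \<and> i \<in> P d \<longrightarrow> a d' i \<le> a d i)"
proof (cases "n = 0")
  case True
  then have "D = {}" using PD by fastforce
  then show ?thesis using True by auto
next
  case False
  then have n1: "n \<ge> 1" by simp
  have npos: "real n > 0" using n1 by simp
  have Dne: "D \<noteq> {}" using slack[of 1] n1 by auto
  have finP: "finite (P d)" if "d \<in> D" for d using PD[OF that] finite_subset by blast
  have cardP: "card (P d) > 0" if "d \<in> D" for d using PD[OF that] finP[OF that] by (simp add: card_gt_0_iff)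
  define K :: real where "K = real (\<Sum>d\<in>D. \<Sum>i\<in>P d. a d i) + 1"
  have aK: "real (a d i) < K" if "d \<in> D" "i \<in> P d" for d i
  proof -
    have "a d i \<le> (\<Sum>i\<in>P d. a d i)" by (rule member_le_sum) (use that finP in auto)
    also have "\<dots> \<le> (\<Sum>d\<in>D. \<Sum>i\<in>P d. a d i)" by (rule member_le_sum) (use that finD in auto)
    finally show ?thesis unfolding K_def by linarith
  qed
  define L :: real where "L = real n * (K + 1)"
  define v where "v d t = Min ((\<lambda>i. real (a d i) + L * t i) ` P d)" for d and t :: "nat \<Rightarrow> real"
  define h where "h t = Max ((\<lambda>d. v d t) ` D)" for t
  define w where "w d t = max 0 (1/2 - (h t - v d t))" for d t
  define W where "W t = (\<Sum>d\<in>D. w d t)" for t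
  define g where "g t i = (\<Sum>d\<in>{d\<in>D. i \<in> P d}. w d t / real (card (P d))) / W t" for t i
  define \<delta> where "\<delta> t i = max 0 (1 / real n - g t i)" for t i
  define f where "f t i = (if i \<in> {1..n} then (t i + \<delta> t i) / (1 + (\<Sum>j=1..n. \<delta> t j)) else 0)" for t i
  define \<phi> where "\<phi> x i = x i / max 1 (\<Sum>j=1..n. x j) + max 0 (1 - (\<Sum>j=1..n. x j)) / real n"
    for x :: "nat \<Rightarrow> real" and i
  define C where "C = {x :: nat \<Rightarrow> real. \<forall>i<Suc n. 0 \<le> x i \<and> x i \<le> 1}"
  define FF where "FF x = f (\<phi> x)" for x

  have v_le: "v d t \<le> real (a d i) + L * t i" if "d \<in> D" "i \<in> P d" for d i t
    unfolding v_def by (rule Min_le) (use that finP in auto)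
  have v_att: "\<exists>i\<in>P d. v d t = real (a d i) + L * t i" if "d \<in> D" for d t
  proof -
    have "v d t \<in> (\<lambda>i. real (a d i) + L * t i) ` P d"
      unfolding v_def by (rule Min_in) (use that finP PD in auto)
    then show ?thesis by auto
  qed
  have h_ge: "v d t \<le> h t" if "d \<in> D" for d t
    unfolding h_def by (rule Max_ge) (use that finD in auto)
  have h_att: "\<exists>d\<in>D. v d t = h t" for t
  proof -
    have "h t \<in> (\<lambda>d. v d t) ` D"
      unfolding h_def by (rule Max_in) (use finD Dne in auto)
    then show ?thesis by auto
  qed
  have w_nn: "0 \<le> w d t" for d t unfolding w_def by simp
  have w_pos: "h t - v d t < 1/2" if "0 < w d t" for d t
    using that unfolding w_def by (auto simp: max_def split: if_splits)
  have W_pos: "W t \<ge> 1/2" for t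
  proof -
    obtain d0 where d0: "d0 \<in> D" "v d0 t = h t" using h_att by blast
    have "w d0 t = 1/2" using d0 unfolding w_def by simp
    moreover have "w d0 t \<le> W t" unfolding W_def by (rule member_le_sum) (use d0 finD w_nn in auto)
    ultimately show ?thesis by simp
  qed
  have g_nn: "0 \<le> g t i" for t i
    unfolding g_def using W_pos[of t] w_nn by (auto intro!: divide_nonneg_nonneg sum_nonneg)
  have g_sum: "(\<Sum>i=1..n. g t i) = 1" for t
  proof -
    have "(\<Sum>i=1..n. \<Sum>d\<in>{d\<in>D. i \<in> P d}. w d t / real (card (P d)))
        = (\<Sum>i=1..n. \<Sum>d\<in>D. if i \<in> P d then w d t / real (card (P d)) else 0)"
      by (rule sum.cong[OF refl]) (simp add: sum.inter_filter[OF finD])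
    also have "\<dots> = (\<Sum>d\<in>D. \<Sum>i=1..n. if i \<in> P d then w d t / real (card (P d)) else 0)"
      by (rule sum.swap)
    also have "\<dots> = (\<Sum>d\<in>D. w d t)"
    proof (rule sum.cong[OF refl])
      fix d assume d: "d \<in> D"
      have "(\<Sum>i=1..n. if i \<in> P d then w d t / real (card (P d)) else 0)
          = (\<Sum>i\<in>{1..n} \<inter> P d. w d t / real (card (P d)))"
        by (rule sum.inter_restrict[symmetric]) simp
      also have "{1..n} \<inter> P d = P d" using PD[OF d] by auto
      finally show "(\<Sum>i=1..n. if i \<in> P d then w d t / real (card (P d)) else 0) = w d t"
        using cardP[OF d] by simp
    qed
    finally show ?thesis unfolding g_def W_def
      using W_pos[of t] unfolding W_def by (simp add: sum_divide_distrib[symmetric])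
  qed
  have \<delta>_nn: "0 \<le> \<delta> t i" for t i unfolding \<delta>_def by simp

  have phi_nn: "0 \<le> \<phi> x i" if "x \<in> C" "i \<in> {1..n}" for x i
    using that npos unfolding \<phi>_def C_def by (auto intro!: add_nonneg_nonneg divide_nonneg_nonneg)
  have phi_sum: "(\<Sum>i=1..n. \<phi> x i) = 1" for x
  proof -
    define S where "S = (\<Sum>j=1..n. x j)"
    have "(\<Sum>i=1..n. \<phi> x i) = S / max 1 S + real n * (max 0 (1 - S) / real n)"
      unfolding \<phi>_def by (simp add: sum.distrib sum_divide_distrib[symmetric] S_def)
    also have "\<dots> = 1" using npos by (cases "S \<le> 1") (auto simp: max_def)
    finally show ?thesis .
  qed
  have f_nn: "0 \<le> f t i" if "\<And>j. j \<in> {1..n} \<Longrightarrow> 0 \<le> t j" for t i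
    unfolding f_def using that \<delta>_nn by (auto intro!: divide_nonneg_nonneg add_nonneg_nonneg sum_nonneg)
  have f_sum: "(\<Sum>i=1..n. f t i) = 1" if "(\<Sum>j=1..n. t j) = 1" for t
  proof -
    have pos: "1 + (\<Sum>j=1..n. \<delta> t j) > 0" using \<delta>_nn by (simp add: add_pos_nonneg sum_nonneg)
    have "(\<Sum>i=1..n. f t i) = (\<Sum>i=1..n. (t i + \<delta> t i) / (1 + (\<Sum>j=1..n. \<delta> t j)))"
      unfolding f_def by (rule sum.cong) auto
    also have "\<dots> = ((\<Sum>i=1..n. t i) + (\<Sum>i=1..n. \<delta> t i)) / (1 + (\<Sum>j=1..n. \<delta> t j))"
      by (simp add: sum_divide_distrib[symmetric] sum.distrib)
    also have "\<dots> = 1" using that pos by simp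
    finally show ?thesis .
  qed
  have f_le1: "f t i \<le> 1" if "(\<Sum>j=1..n. t j) = 1" "\<And>j. j \<in> {1..n} \<Longrightarrow> 0 \<le> t j" for t i
  proof (cases "i \<in> {1..n}")
    case True
    have "f t i \<le> (\<Sum>i=1..n. f t i)"
      by (rule member_le_sum) (use True f_nn that in auto)
    then show ?thesis using f_sum[OF that(1)] by simp
  next
    case False then have "f t i = 0" unfolding f_def by meson
    then show ?thesis by simp
  qed
  have FC: "FF x \<in> C" if "x \<in> C" for x
    unfolding C_def FF_def
  proof (intro CollectI allI impI conjI)
    fix i assume "i < Suc n"
    show "0 \<le> f (\<phi> x) i" by (rule f_nn) (use phi_nn that in auto)
    show "f (\<phi> x) i \<le> 1" by (rule f_le1) (use phi_nn that phi_sum in auto)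
  qed

  have cont_f: "(\<lambda>k. f (T k) i) \<longlonglongrightarrow> f t i"
    if T: "\<And>j. j \<in> {1..n} \<Longrightarrow> (\<lambda>k. T k j) \<longlonglongrightarrow> t j" for T t i
  proof -
    have vc: "(\<lambda>k. v d (T k)) \<longlonglongrightarrow> v d t" if d: "d \<in> D" for d
      unfolding v_def
    proof (rule tendsto_Min_fin[where f="\<lambda>k i. real (a d i) + L * T k i"])
      show "finite (P d)" "P d \<noteq> {}" using finP PD d by auto
      fix j assume jP: "j \<in> P d"
      have "j \<in> {1..n}" using PD[OF d] jP by blast
      then show "(\<lambda>k. real (a d j) + L * T k j) \<longlonglongrightarrow> real (a d j) + L * t j"
        by (intro tendsto_intros T)
    qed
    have hc: "(\<lambda>k. h (T k)) \<longlonglongrightarrow> h t"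
      unfolding h_def
      by (rule tendsto_Max_fin[where f="\<lambda>k d. v d (T k)"]) (use finD Dne vc in auto)
    have wc: "(\<lambda>k. w d (T k)) \<longlonglongrightarrow> w d t" if "d \<in> D" for d
      unfolding w_def by (intro tendsto_intros hc vc that)
    have Wc: "(\<lambda>k. W (T k)) \<longlonglongrightarrow> W t"
      unfolding W_def by (intro tendsto_sum wc) auto
    have gc: "(\<lambda>k. g (T k) j) \<longlonglongrightarrow> g t j" for j
      unfolding g_def
    proof (rule tendsto_divide[OF tendsto_sum Wc])
      show "W t \<noteq> 0" using W_pos[of t] by simp
      fix d assume "d \<in> {d \<in> D. j \<in> P d}"
      then show "(\<lambda>k. w d (T k) / real (card (P d))) \<longlonglongrightarrow> w d t / real (card (P d))"
        by (intro tendsto_intros wc) (use cardP in auto)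
    qed
    have dc: "(\<lambda>k. \<delta> (T k) j) \<longlonglongrightarrow> \<delta> t j" for j
      unfolding \<delta>_def by (intro tendsto_intros gc)
    show ?thesis
    proof (cases "i \<in> {1..n}")
      case True
      have den: "1 + (\<Sum>j=1..n. \<delta> t j) \<noteq> 0" using \<delta>_nn by (smt (verit) sum_nonneg)
      have "(\<lambda>k. (T k i + \<delta> (T k) i) / (1 + (\<Sum>j=1..n. \<delta> (T k) j)))
            \<longlonglongrightarrow> (t i + \<delta> t i) / (1 + (\<Sum>j=1..n. \<delta> t j))"
        by (intro tendsto_divide tendsto_add tendsto_const tendsto_sum dc T True den)
      then show ?thesis unfolding f_def using True by simp
    next
      case False then have "\<And>s. f s i = 0" unfolding f_def by meson
      then show ?thesis by simp
    qed
  qed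
  have contFF: "(\<lambda>k. FF (X k) i) \<longlonglongrightarrow> FF l i"
    if XC: "\<And>k. X k \<in> C" and lC: "l \<in> C" and Xl: "\<And>j. j < Suc n \<Longrightarrow> (\<lambda>k. X k j) \<longlonglongrightarrow> l j"
      and i: "i < Suc n" for X l i
    unfolding FF_def
  proof (rule cont_f)
    fix j :: nat assume j: "j \<in> {1..n}"
    have Xl': "(\<lambda>k. X k j') \<longlonglongrightarrow> l j'" if "j' \<in> {1..n}" for j'
      using Xl that by auto
    have "max 1 (\<Sum>j=1..n. l j) \<noteq> 0" by simp
    then show "(\<lambda>k. \<phi> (X k) j) \<longlonglongrightarrow> \<phi> l j"
      unfolding \<phi>_def
      by (intro tendsto_intros tendsto_divide tendsto_sum Xl' j) (use n1 in auto)
  qed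
  obtain x where xC: "x \<in> C" and xfix: "\<forall>i<Suc n. FF x i = x i"
    using brouwer_nat[where F=FF and m="Suc n", OF C_def FC contFF] by blast
  define t where "t = \<phi> x"
  have t_nn: "0 \<le> t j" if "j \<in> {1..n}" for j using phi_nn[OF xC that] unfolding t_def .
  have t_sum: "(\<Sum>j=1..n. t j) = 1" unfolding t_def by (rule phi_sum)
  have x_sum: "(\<Sum>j=1..n. x j) = 1"
  proof -
    have "(\<Sum>j=1..n. x j) = (\<Sum>j=1..n. FF x j)"
      by (rule sum.cong) (use xfix in auto)
    also have "\<dots> = 1" unfolding FF_def using f_sum[OF t_sum] unfolding t_def .
    finally show ?thesis .
  qed
  have tx: "t j = x j" for j unfolding t_def \<phi>_def x_sum by simp
  have tfix: "f t j = t j" if "j \<in> {1..n}" for j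
    using xfix that tx unfolding FF_def t_def[symmetric] by auto
  define S where "S = (\<Sum>j=1..n. \<delta> t j)"
  have S_nn: "S \<ge> 0" unfolding S_def using \<delta>_nn by (simp add: sum_nonneg)
  have eqS: "t j * S = \<delta> t j" if "j \<in> {1..n}" for j
  proof -
    have "(t j + \<delta> t j) / (1 + S) = t j" using tfix[OF that] that unfolding f_def S_def by simp
    then have "t j + \<delta> t j = t j * (1 + S)" using S_nn by (simp add: field_simps)
    then show ?thesis by (simp add: algebra_simps)
  qed

  have S0: "S = 0"
  proof (rule ccontr)
    assume "S \<noteq> 0"
    then have Spos: "S > 0" using S_nn by simp
    have "\<exists>j\<in>{1..n}. g t j > 1 / real n"
    proof (rule ccontr)
      assume "\<not> ?thesis"
      then have gle: "g t j \<le> 1 / real n" if "j \<in> {1..n}" for j using that by force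
      obtain k where k: "k \<in> {1..n}" "\<delta> t k > 0"
      proof -
        have "(\<Sum>j=1..n. \<delta> t j) \<noteq> 0" using Spos unfolding S_def by simp
        then obtain k where "k \<in> {1..n}" "\<delta> t k \<noteq> 0" using sum.not_neutral_contains_not_neutral by blast
        moreover then have "\<delta> t k > 0" using \<delta>_nn[of t k] by simp
        ultimately show ?thesis using that by blast
      qed
      have "g t k < 1 / real n" using k unfolding \<delta>_def by (auto simp: max_def split: if_splits)
      then have "(\<Sum>j=1..n. g t j) < (\<Sum>j=1..n. 1 / real n)"
        by (intro sum_strict_mono_ex1) (use gle k in auto)
      then show False using g_sum npos by simp
    qed
    then obtain j where j: "j \<in> {1..n}" "g t j > 1 / real n" by blast
    have "\<delta> t j = 0" using j unfolding \<delta>_def by simp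
    then have tj0: "t j = 0" using eqS[OF j(1)] Spos by simp
    have "g t j > 0" using j npos by (smt (verit) divide_pos_pos)
    then have "(\<Sum>d\<in>{d\<in>D. j \<in> P d}. w d t / real (card (P d))) \<noteq> 0"
      unfolding g_def by auto
    then obtain d where d: "d \<in> D" "j \<in> P d" "w d t / real (card (P d)) \<noteq> 0"
      using sum.not_neutral_contains_not_neutral by blast
    have wpos: "w d t > 0" using d(3) w_nn[of d t] by (simp add: order_le_less)
    have "v d t \<le> real (a d j)" using v_le[OF d(1) d(2), of t] tj0 by simp
    then have vK: "v d t < K" using aK[OF d(1) d(2)] by simp
    have "\<exists>k\<in>{1..n}. t k \<ge> 1 / real n"
    proof (rule ccontr)
      assume "\<not> (\<exists>k\<in>{1..n}. t k \<ge> 1 / real n)"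
      then have "t k < 1 / real n" if "k \<in> {1..n}" for k using that by force
      then have "(\<Sum>j=1..n. t j) < (\<Sum>j=1..n. 1 / real n)"
        by (intro sum_strict_mono) (use n1 in auto)
      then show False using t_sum npos by simp
    qed
    then obtain k where k: "k \<in> {1..n}" "t k \<ge> 1 / real n" by blast
    obtain dk where dk: "dk \<in> D" "P dk = {k}" "a dk k = 0" using slack[OF k(1)] by blast
    have "v dk t = L * t k" using dk by (simp add: v_def)
    also have "\<dots> \<ge> L * (1 / real n)"
    proof (rule mult_left_mono[OF k(2)])
      have "K \<ge> 1" unfolding K_def by (simp add: sum_nonneg)
      then show "0 \<le> L" unfolding L_def by simp
    qed
    finally have "v dk t \<ge> K + 1" unfolding L_def using npos by simp
    then have "h t \<ge> K + 1" using h_ge[OF dk(1), of t] by simp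
    then show False using w_pos[OF wpos] vK by simp
  qed
  have \<delta>0: "\<delta> t j = 0" if "j \<in> {1..n}" for j
    using S0 \<delta>_nn that unfolding S_def by (simp add: sum_nonneg_eq_0_iff)
  have gge: "g t j \<ge> 1 / real n" if "j \<in> {1..n}" for j
    using \<delta>0[OF that] unfolding \<delta>_def by (simp add: max_def split: if_splits)
  have geq: "g t j = 1 / real n" if "j \<in> {1..n}" for j
  proof -
    have "(\<Sum>j=1..n. g t j - 1 / real n) = 0" using g_sum npos by (simp add: sum_subtractf)
    then have "\<forall>j\<in>{1..n}. g t j - 1 / real n = 0"
      by (subst (asm) sum_nonneg_eq_0_iff) (use gge in auto)
    then show ?thesis using that by simp
  qed
  define \<mu> where "\<mu> d = (real n / W t) * (w d t / real (card (P d)))" for d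
  have Wt: "W t > 0" using W_pos[of t] by simp
  have R1: "\<forall>d\<in>D. 0 \<le> \<mu> d"
  proof
    fix d assume "d \<in> D"
    show "0 \<le> \<mu> d" unfolding \<mu>_def using Wt npos w_nn by (auto intro!: mult_nonneg_nonneg divide_nonneg_nonneg)
  qed
  have R2: "\<forall>i\<in>{1..n}. (\<Sum>d\<in>{d\<in>D. i \<in> P d}. \<mu> d) = 1"
  proof
    fix i assume i: "i \<in> {1..n}"
    have "(\<Sum>d\<in>{d\<in>D. i \<in> P d}. \<mu> d) = (real n / W t) * (\<Sum>d\<in>{d\<in>D. i \<in> P d}. w d t / real (card (P d)))"
      unfolding \<mu>_def by (rule sum_distrib_left[symmetric])
    also have "\<dots> = real n * g t i" unfolding g_def by simp
    also have "\<dots> = 1" using geq[OF i] npos by simp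
    finally show "(\<Sum>d\<in>{d\<in>D. i \<in> P d}. \<mu> d) = 1" .
  qed
  have R3: "\<forall>d'\<in>D. \<exists>i\<in>P d'. \<forall>d\<in>D. 0 < \<mu> d \<and> i \<in> P d \<longrightarrow> a d' i \<le> a d i"
  proof
    fix d' assume d': "d' \<in> D"
    obtain i where i: "i \<in> P d'" "v d' t = real (a d' i) + L * t i" using v_att[OF d'] by blast
    show "\<exists>i\<in>P d'. \<forall>d\<in>D. 0 < \<mu> d \<and> i \<in> P d \<longrightarrow> a d' i \<le> a d i"
    proof (intro bexI[OF _ i(1)] ballI impI)
      fix d assume d: "d \<in> D" and md: "0 < \<mu> d \<and> i \<in> P d"
      have "w d t \<noteq> 0" using md unfolding \<mu>_def by auto
      then have "w d t > 0" using w_nn[of d t] by (simp add: order_le_less)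
      then have "h t - v d t < 1/2" by (rule w_pos)
      moreover have "v d t \<le> real (a d i) + L * t i" using v_le[OF d] md by simp
      moreover have "v d' t \<le> h t" using h_ge[OF d'] .
      ultimately have "real (a d' i) < real (a d i) + 1" using i(2) by simp
      then show "a d' i \<le> a d i" by linarith
    qed
  qed
  from R1 R2 R3 show ?thesis by (intro exI[where x=\<mu>] conjI)
qed



theorem mainTheorem1:
  fixes E :: "('v \<times> 'v) set" and n :: nat and Vs Us :: "nat \<Rightarrow> 'v set" and \<Delta> :: nat
  assumes fin: "\<forall>i\<in>{1..n}. finite (Vs i)"
    and disj: "\<forall>i\<in>{1..n}. \<forall>j\<in>{1..n}. i \<noteq> j \<longrightarrow> Vs i \<inter> Vs j = {}"
    and pat: "\<forall>i\<in>{1..n}. Us i \<subseteq> Vs i"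
    and arcs: "E \<subseteq> (\<Union>i\<in>{1..n}. Vs i) \<times> (\<Union>i\<in>{1..n}. Vs i)"
    and noloop: "\<forall>v. (v, v) \<notin> E"
    and bound: "\<Delta> \<ge> 2"
  shows "\<exists>y. fractional_exchange E (\<Union>i\<in>{1..n}. Vs i) \<Delta> y \<and>
    (\<forall>V0 E' X. finite V0 \<and> V0 \<inter> (\<Union>i\<in>{1..n}. Vs i) = {} \<and>
       extended_graph E (\<Union>i\<in>{1..n}. Vs i) V0 E' \<and>
       is_exchange E' ((\<Union>i\<in>{1..n}. Vs i) \<union> V0) \<Delta> X \<and>
       (\<forall>i\<in>{1..n}. int (util (Us i) X) \<ge> \<lfloor>\<Sum>c\<in>cycles E \<Delta>. real (gamma (Us i) c) * y c\<rfloor>)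
       \<longrightarrow> in_supp_core E Vs Us n \<Delta> X)"
proof -
  define V where "V = (\<Union>i\<in>{1..n}. Vs i)"
  have finV: "finite V" unfolding V_def using fin by auto
  have finE: "finite E" using arcs finV unfolding V_def[symmetric] by (meson finite_SigmaI finite_subset)
  define CC where "CC = cycles E \<Delta>"
  have finCC: "finite CC" unfolding CC_def by (rule cycles_finite[OF finE])
  define D where "D = {(P, X). P \<subseteq> {1..n} \<and> P \<noteq> {} \<and> is_exchange E (\<Union>i\<in>P. Vs i) \<Delta> X}"
  have D_sub: "D \<subseteq> Pow {1..n} \<times> Pow CC"
    unfolding D_def CC_def using exch_cycles by fastforce
  have finD: "finite D" by (rule finite_subset[OF D_sub]) (use finCC in auto)
  have PD: "fst d \<noteq> {} \<and> fst d \<subseteq> {1..n}" if "d \<in> D" for d using that unfolding D_def by auto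
  have slack: "\<exists>d\<in>D. fst d = {i} \<and> util (Us i) (snd d) = 0" if "i \<in> {1..n}" for i
  proof (rule bexI[of _ "({i}, {})"])
    show "({i}, {}) \<in> D" using that unfolding D_def is_exchange_def by auto
  qed (auto simp: util_def)
  obtain \<mu> :: "_ \<Rightarrow> real" where mu_nn: "\<forall>d\<in>D. 0 \<le> \<mu> d"
    and mu_sum: "\<forall>i\<in>{1..n}. (\<Sum>d\<in>{d\<in>D. i \<in> fst d}. \<mu> d) = 1"
    and mu_dom: "\<forall>d'\<in>D. \<exists>i\<in>fst d'. \<forall>d\<in>D. 0 < \<mu> d \<and> i \<in> fst d \<longrightarrow> util (Us i) (snd d') \<le> util (Us i) (snd d)"
    using kkms[of D fst n "\<lambda>d i. util (Us i) (snd d)", OF finD PD slack] by blast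
  define y where "y c = (\<Sum>d\<in>D. if c \<in> snd d then \<mu> d else 0)" for c
  have snd_sub: "snd d \<subseteq> CC" if "d \<in> D" for d using subsetD[OF D_sub that] by (simp add: mem_Times_iff)
  have snd_exch: "is_exchange E (\<Union>i\<in>fst d. Vs i) \<Delta> (snd d)" if "d \<in> D" for d
    using that unfolding D_def by auto
  have y_nn: "0 \<le> y c" for c unfolding y_def using mu_nn by (auto intro!: sum_nonneg)
  have vsum: "(\<Sum>c\<in>{c\<in>CC. v \<in> verts c}. y c) \<le> 1" if v: "v \<in> V" for v
  proof -
    obtain i0 where i0: "i0 \<in> {1..n}" "v \<in> Vs i0" using v unfolding V_def by blast
    define Sv where "Sv = {c\<in>CC. v \<in> verts c}"
    have finSv: "finite Sv" unfolding Sv_def using finCC by simp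
    have "(\<Sum>c\<in>Sv. y c) = (\<Sum>d\<in>D. \<Sum>c\<in>Sv. if c \<in> snd d then \<mu> d else 0)"
      unfolding y_def by (rule sum.swap)
    also have "\<dots> = (\<Sum>d\<in>D. \<mu> d * real (card (Sv \<inter> snd d)))"
    proof (rule sum.cong[OF refl])
      fix d assume "d \<in> D"
      have "(\<Sum>c\<in>Sv. if c \<in> snd d then \<mu> d else 0) = (\<Sum>c\<in>Sv \<inter> snd d. \<mu> d)"
        by (rule sum.inter_restrict[symmetric, OF finSv])
      then show "(\<Sum>c\<in>Sv. if c \<in> snd d then \<mu> d else 0) = \<mu> d * real (card (Sv \<inter> snd d))"
        by simp
    qed
    also have "\<dots> \<le> (\<Sum>d\<in>D. if i0 \<in> fst d then \<mu> d else 0)"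
    proof (rule sum_mono)
      fix d assume d: "d \<in> D"
      show "\<mu> d * real (card (Sv \<inter> snd d)) \<le> (if i0 \<in> fst d then \<mu> d else 0)"
      proof (cases "Sv \<inter> snd d = {}")
        case True then show ?thesis using mu_nn d by simp
      next
        case False
        then obtain c where c: "c \<in> Sv" "c \<in> snd d" by blast
        have ex: "is_exchange E (\<Union>i\<in>fst d. Vs i) \<Delta> (snd d)" by (rule snd_exch[OF d])
        have "c \<in> cycles (E \<inter> (\<Union>i\<in>fst d. Vs i) \<times> (\<Union>i\<in>fst d. Vs i)) \<Delta>"
          using ex c(2) unfolding is_exchange_def by blast
        then have "verts c \<subseteq> (\<Union>i\<in>fst d. Vs i)" by (rule verts_sub)
        moreover have "v \<in> verts c" using c(1) unfolding Sv_def by simp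
        ultimately obtain j where j: "j \<in> fst d" "v \<in> Vs j" by blast
        have jN: "j \<in> {1..n}" using PD[OF d] j(1) by blast
        have "j = i0"
        proof (rule ccontr)
          assume "j \<noteq> i0"
          then have "Vs j \<inter> Vs i0 = {}" using disj jN i0(1) by blast
          then show False using j(2) i0(2) by blast
        qed
        then have i0d: "i0 \<in> fst d" using j by simp
        have "card (Sv \<inter> snd d) \<le> 1"
        proof -
          have "finite (Sv \<inter> snd d)" using finSv by simp
          moreover have "\<forall>c1\<in>Sv \<inter> snd d. \<forall>c2\<in>Sv \<inter> snd d. c1 = c2"
          proof (intro ballI)
            fix c1 c2 assume c1: "c1 \<in> Sv \<inter> snd d" and c2: "c2 \<in> Sv \<inter> snd d"
            have dj: "\<forall>c\<in>snd d. \<forall>c'\<in>snd d. c \<noteq> c' \<longrightarrow> verts c \<inter> verts c' = {}"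
              using ex unfolding is_exchange_def by blast
            have "v \<in> verts c1" "v \<in> verts c2" using c1 c2 unfolding Sv_def by auto
            then show "c1 = c2" using dj c1 c2 by blast
          qed
          ultimately show ?thesis using card_le_Suc0_iff_eq by (metis One_nat_def)
        qed
        then have "\<mu> d * real (card (Sv \<inter> snd d)) \<le> \<mu> d * 1"
          using mu_nn d by (intro mult_left_mono) auto
        then show ?thesis using i0d by simp
      qed
    qed
    also have "\<dots> = (\<Sum>d\<in>{d\<in>D. i0 \<in> fst d}. \<mu> d)"
      by (rule sum.inter_filter[symmetric, OF finD])
    also have "\<dots> = 1" using mu_sum i0 by blast
    finally show ?thesis unfolding Sv_def .
  qed
  have frac: "fractional_exchange E V \<Delta> y"
    unfolding fractional_exchange_def CC_def[symmetric]
  proof (intro conjI ballI)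
    fix c assume c: "c \<in> CC"
    show "0 \<le> y c" by (rule y_nn)
    obtain v where v: "v \<in> verts c" using verts_ne c unfolding CC_def by blast
    have "c \<subseteq> E" using c cycles_sub unfolding CC_def by blast
    moreover obtain b where "(v, b) \<in> c" using v unfolding verts_def by auto
    ultimately have "(v, b) \<in> E" by blast
    then have vV: "v \<in> V" using arcs unfolding V_def by blast
    have "y c \<le> (\<Sum>c\<in>{c\<in>CC. v \<in> verts c}. y c)"
      by (rule member_le_sum) (use c v y_nn finCC in auto)
    then show "y c \<le> 1" using vsum[OF vV] by simp
  next
    fix v assume "v \<in> V"
    then show "(\<Sum>c\<in>{c\<in>CC. v \<in> verts c}. y c) \<le> 1" by (rule vsum)
  qed
  have ubound: "real (util (Us i) (snd d')) \<le> (\<Sum>c\<in>CC. real (gamma (Us i) c) * y c)"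
    if d': "d' \<in> D" and i: "i \<in> fst d'"
      and dom: "\<forall>d\<in>D. 0 < \<mu> d \<and> i \<in> fst d \<longrightarrow> util (Us i) (snd d') \<le> util (Us i) (snd d)" for d' i
  proof -
    have iN: "i \<in> {1..n}" using PD[OF d'] i by blast
    have "(\<Sum>c\<in>CC. real (gamma (Us i) c) * y c)
        = (\<Sum>c\<in>CC. \<Sum>d\<in>D. if c \<in> snd d then real (gamma (Us i) c) * \<mu> d else 0)"
      unfolding y_def by (simp add: sum_distrib_left if_distrib cong: if_cong)
    also have "\<dots> = (\<Sum>d\<in>D. \<Sum>c\<in>CC. if c \<in> snd d then real (gamma (Us i) c) * \<mu> d else 0)"
      by (rule sum.swap)
    also have "\<dots> = (\<Sum>d\<in>D. \<mu> d * real (util (Us i) (snd d)))"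
    proof (rule sum.cong[OF refl])
      fix d assume d: "d \<in> D"
      have "(\<Sum>c\<in>CC. if c \<in> snd d then real (gamma (Us i) c) * \<mu> d else 0)
          = (\<Sum>c\<in>CC \<inter> snd d. real (gamma (Us i) c) * \<mu> d)"
        by (rule sum.inter_restrict[symmetric, OF finCC])
      also have "CC \<inter> snd d = snd d" using snd_sub[OF d] by blast
      also have "(\<Sum>c\<in>snd d. real (gamma (Us i) c) * \<mu> d) = \<mu> d * real (\<Sum>c\<in>snd d. gamma (Us i) c)"
        by (simp add: sum_distrib_left mult.commute)
      also have "(\<Sum>c\<in>snd d. gamma (Us i) c) = util (Us i) (snd d)"
        by (rule util_sum[OF finE snd_exch[OF d], symmetric])
      finally show "(\<Sum>c\<in>CC. if c \<in> snd d then real (gamma (Us i) c) * \<mu> d else 0)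
          = \<mu> d * real (util (Us i) (snd d))" .
    qed
    also have "\<dots> \<ge> (\<Sum>d\<in>D. if i \<in> fst d then \<mu> d * real (util (Us i) (snd d')) else 0)"
    proof (rule sum_mono)
      fix d assume d: "d \<in> D"
      show "(if i \<in> fst d then \<mu> d * real (util (Us i) (snd d')) else 0) \<le> \<mu> d * real (util (Us i) (snd d))"
      proof (cases "i \<in> fst d")
        case True
        show ?thesis
        proof (cases "\<mu> d = 0")
          case True then show ?thesis by simp
        next
          case False
          moreover have "0 \<le> \<mu> d" using mu_nn d by blast
          ultimately have "0 < \<mu> d" by simp
          then have "util (Us i) (snd d') \<le> util (Us i) (snd d)" using dom d \<open>i \<in> fst d\<close> by blast
          then show ?thesis using \<open>i \<in> fst d\<close> \<open>0 < \<mu> d\<close> by simp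
        qed
      next
        case False then show ?thesis using mu_nn d by simp
      qed
    qed
    also have "(\<Sum>d\<in>D. if i \<in> fst d then \<mu> d * real (util (Us i) (snd d')) else 0)
        = (\<Sum>d\<in>{d\<in>D. i \<in> fst d}. \<mu> d) * real (util (Us i) (snd d'))"
      by (simp add: sum.inter_filter[OF finD, symmetric] sum_distrib_right)
    also have "\<dots> = real (util (Us i) (snd d'))" using mu_sum iN by simp
    finally show ?thesis by simp
  qed
  show ?thesis
  proof (rule exI[where x=y], intro conjI allI impI)
    show "fractional_exchange E (\<Union>i\<in>{1..n}. Vs i) \<Delta> y" using frac unfolding V_def .
  next
    fix V0 E' X
    assume H: "finite V0 \<and> V0 \<inter> (\<Union>i\<in>{1..n}. Vs i) = {} \<and>
       extended_graph E (\<Union>i\<in>{1..n}. Vs i) V0 E' \<and>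
       is_exchange E' ((\<Union>i\<in>{1..n}. Vs i) \<union> V0) \<Delta> X \<and>
       (\<forall>i\<in>{1..n}. int (util (Us i) X) \<ge> \<lfloor>\<Sum>c\<in>cycles E \<Delta>. real (gamma (Us i) c) * y c\<rfloor>)"
    then have fl: "\<And>i. i \<in> {1..n} \<Longrightarrow> int (util (Us i) X) \<ge> \<lfloor>\<Sum>c\<in>CC. real (gamma (Us i) c) * y c\<rfloor>"
      unfolding CC_def by blast
    show "in_supp_core E Vs Us n \<Delta> X"
      unfolding in_supp_core_def
    proof
      assume "\<exists>P\<subseteq>{1..n}. blocks E Vs Us \<Delta> P X"
      then obtain P X' where P: "P \<subseteq> {1..n}" "P \<noteq> {}" and X': "is_exchange E (\<Union>i\<in>P. Vs i) \<Delta> X'"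
        and better: "\<forall>i\<in>P. util (Us i) X' > util (Us i) X"
        unfolding blocks_def by blast
      have d': "(P, X') \<in> D" unfolding D_def using P X' by auto
      obtain i where i: "i \<in> P" and dom: "\<forall>d\<in>D. 0 < \<mu> d \<and> i \<in> fst d \<longrightarrow> util (Us i) X' \<le> util (Us i) (snd d)"
        using mu_dom d' by fastforce
      have "real (util (Us i) X') \<le> (\<Sum>c\<in>CC. real (gamma (Us i) c) * y c)"
        using ubound[OF d', of i] i dom by simp
      then have "int (util (Us i) X') \<le> \<lfloor>\<Sum>c\<in>CC. real (gamma (Us i) c) * y c\<rfloor>"
        by (simp add: le_floor_iff)
      also have "\<dots> \<le> int (util (Us i) X)" using fl i P by blast
      finally have "util (Us i) X' \<le> util (Us i) X" by simp
      moreover have "util (Us i) X < util (Us i) X'" using better i by blast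
      ultimately show False by simp
    qed
  qed
qed

end
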